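(* Consider problem (P) under the standing assumptions stated in the context, and suppose (P) is solvable. Then the set of all globally optimal solutions of (P) is $$\mathcal{S}=\{\tilde{\mathbf{x}}\in\mathbb{R}^n : \tilde{x}_j\le x^*_j(\mathbf{A},\mathbf{b}) \text{ for all } j \text{ with } k_j=0,\ \text{and } \tilde{x}_j=x^*_j(\mathbf{A},\mathbf{b}) \text{ for all } j \text{ with } k_j>0\}.$$
   Context: Max-plus algebra: $\mathbb{R}_{\max}=\mathbb{R}\cup\{-\infty\}$ with $a\oplus b=\max\{a,b\}$ and $a\otimes b=a+b$; $\varepsilon=-\infty$. For $\mathbf{A}=(a_{ij})\in\mathbb{R}_{\max}^{m\times n}$ and $\mathbf{x}=(x_j)\in\mathbb{R}^n$, $\mathbf{A}\otimes\mathbf{x}$ is the vector with $i$th component $F_i(\mathbf{x})=\max_{1\le j\le n}(a_{ij}+x_j)$, with $r+(-\infty)=-\infty$. Vectors are compared componentwise. Problem (P): given $\mathbf{A}=(a_{ij})\in\mathbb{R}_{\max}^{m\times n}$, reals $k_1,\dots,k_n\ge 0$ not all zero, and $c\in\mathbb{R}$, let $\mathcal{X}=\{\mathbf{x}\in\mathbb{R}^n : \sum_{j=1}^n k_jx_j=c\}$ and $F(\mathbf{x})=\mathbf{A}\otimes\mathbf{x}$. A point $\tilde{\mathbf{x}}\in\mathcal{X}$ is a globally optimal solution of (P) if $F(\mathbf{x})\ge F(\tilde{\mathbf{x}})$ componentwise for every $\mathbf{x}\in\mathcal{X}$; (P) is solvable if a globally optimal solution exists. Standing assumptions: (1) no row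 of $\mathbf{A}$ consists entirely of $-\infty$ entries; (2) if the $j$th column of $\mathbf{A}$ consists entirely of $-\infty$ entries, then $k_j>0$. Let $\mathcal{J}=\{j : k_j>0\}$. Define $\mathbf{b}=(b_i)$ by $b_i=-\infty$ if $a_{ij}=-\infty$ for some $j\in\mathcal{J}$, and otherwise $b_i=\frac{\sum_{j\in\mathcal{J}}k_ja_{ij}+c}{\sum_{j\in\mathcal{J}}k_j}$. Define $\mathbf{x}^*(\mathbf{A},\mathbf{b})=(x^*_j(\mathbf{A},\mathbf{b}))$ by $x^*_j(\mathbf{A},\mathbf{b})=\min_{1\le i\le m}(b_i-a_{ij})$, with the conventions, for $r\in\mathbb{R}$: $r-(-\infty)=+\infty$, $(-\infty)-r=-\infty$, $(-\infty)-(-\infty)=+\infty$; thus $x^*_j(\mathbf{A},\mathbf{b})\in\mathbb{R}\cup\{-\infty,+\infty\}$. *)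

theory Defs
  imports Complex_Main "HOL-Library.Extended_Real"
begin

text \<open>A matrix A in R_max^(m x n) is a function
  A :: nat => nat => ereal used on rows {..<m} and columns {..<n};
  entries are never +infinity. Vectors x in R^n are functions nat => real
  used on {..<n}.\<close>

definition mp_sub :: "ereal \<Rightarrow> ereal \<Rightarrow> ereal" where
  "mp_sub u v = (if v = -\<infinity> then \<infinity> else if u = -\<infinity> then -\<infinity> else u - v)"

definition mp_F :: "nat \<Rightarrow> (nat \<Rightarrow> nat \<Rightarrow> ereal) \<Rightarrow> (nat \<Rightarrow> real) \<Rightarrow> nat \<Rightarrow> ereal" where
  "mp_F n A x i = Max ((\<lambda>j. A i j + ereal (x j)) ` {..<n})"

definition feasible :: "nat \<Rightarrow> (nat \<Rightarrow> real) \<Rightarrow> real \<Rightarrow> (nat \<Rightarrow> real) \<Rightarrow> bool" where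
  "feasible n k c x \<longleftrightarrow> (\<Sum>j<n. k j * x j) = c"

definition glob_opt ::
  "nat \<Rightarrow> nat \<Rightarrow> (nat \<Rightarrow> nat \<Rightarrow> ereal) \<Rightarrow> (nat \<Rightarrow> real) \<Rightarrow> real \<Rightarrow> (nat \<Rightarrow> real) \<Rightarrow> bool" where
  "glob_opt m n A k c xt \<longleftrightarrow> feasible n k c xt \<and>
     (\<forall>x. feasible n k c x \<longrightarrow> (\<forall>i<m. mp_F n A x i \<ge> mp_F n A xt i))"

definition solvable ::
  "nat \<Rightarrow> nat \<Rightarrow> (nat \<Rightarrow> nat \<Rightarrow> ereal) \<Rightarrow> (nat \<Rightarrow> real) \<Rightarrow> real \<Rightarrow> bool" where
  "solvable m n A k c \<longleftrightarrow> (\<exists>xt. glob_opt m n A k c xt)"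

definition Jset :: "nat \<Rightarrow> (nat \<Rightarrow> real) \<Rightarrow> nat set" where
  "Jset n k = {j. j < n \<and> k j > 0}"

definition bvec :: "nat \<Rightarrow> (nat \<Rightarrow> nat \<Rightarrow> ereal) \<Rightarrow> (nat \<Rightarrow> real) \<Rightarrow> real \<Rightarrow> nat \<Rightarrow> ereal" where
  "bvec n A k c i =
     (if \<exists>j\<in>Jset n k. A i j = -\<infinity> then -\<infinity>
      else ereal (((\<Sum>j\<in>Jset n k. k j * real_of_ereal (A i j)) + c) / (\<Sum>j\<in>Jset n k. k j)))"

definition xstar :: "nat \<Rightarrow> (nat \<Rightarrow> nat \<Rightarrow> ereal) \<Rightarrow> (nat \<Rightarrow> ereal) \<Rightarrow> nat \<Rightarrow> ereal" where
  "xstar m A b j = Min ((\<lambda>i. mp_sub (b i) (A i j)) ` {..<m})"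

end

theory Submission
  imports Defs
begin

lemma sum_J:
  assumes "\<forall>j<n. k j \<ge> (0::real)"
  shows "(\<Sum>j<n. k j * x j) = (\<Sum>j\<in>Jset n k. k j * x j)"
proof (rule sum.mono_neutral_right)
  show "Jset n k \<subseteq> {..<n}" by (auto simp: Jset_def)
  show "\<forall>j\<in>{..<n} - Jset n k. k j * x j = 0"
    using assms by (auto simp: Jset_def)
qed auto

lemma F_ge: "j < n \<Longrightarrow> A i j + ereal (x j) \<le> mp_F n A x i"
  unfolding mp_F_def by (rule Max_ge) auto

lemma F_le_iff: "0 < n \<Longrightarrow> mp_F n A x i \<le> t \<longleftrightarrow> (\<forall>j<n. A i j + ereal (x j) \<le> t)"
  unfolding mp_F_def by (subst Max_le_iff) auto

lemma F_notinf: assumes "0<n" "\<forall>j<n. A i j \<noteq> \<infinity>" shows "mp_F n A x i \<noteq> \<infinity>"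
proof -
  have "mp_F n A x i \<in> (\<lambda>j. A i j + ereal (x j)) ` {..<n}"
    unfolding mp_F_def by (rule Max_in) (use assms in auto)
  then obtain j where "j<n" "mp_F n A x i = A i j + ereal (x j)" by auto
  then show ?thesis using assms by auto
qed

lemma F_notminf: assumes "j<n" "A i j \<noteq> -\<infinity>" shows "mp_F n A x i \<noteq> -\<infinity>"
proof
  assume "mp_F n A x i = -\<infinity>"
  with F_ge[OF assms(1), of A i x] have "A i j + ereal (x j) = -\<infinity>" by simp
  with assms show False by (cases "A i j") auto
qed

lemma sub_iff: assumes "a \<noteq> \<infinity>" shows "ereal r \<le> mp_sub (ereal b) a \<longleftrightarrow> a + ereal r \<le> ereal b"
  using assms by (cases a) (auto simp: mp_sub_def)

lemma xstar_iff: "0 < m \<Longrightarrow> t \<le> xstar m A B j \<longleftrightarrow> (\<forall>i<m. t \<le> mp_sub (B i) (A i j))"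
  unfolding xstar_def by (subst Min_ge_iff) auto

lemma lower:
  assumes k0: "\<forall>j<n. k j \<ge> 0" and Jne: "Jset n k \<noteq> {}"
    and fin: "\<forall>j\<in>Jset n k. A i j \<noteq> -\<infinity>" and ninf: "\<forall>j<n. A i j \<noteq> \<infinity>"
    and fe: "feasible n k c x"
  shows "ereal (((\<Sum>j\<in>Jset n k. k j * real_of_ereal (A i j)) + c) / (\<Sum>j\<in>Jset n k. k j)) \<le> mp_F n A x i"
proof -
  let ?J = "Jset n k"
  have finJ: "finite ?J" by (simp add: Jset_def)
  obtain j0 where j0: "j0 \<in> ?J" using Jne by auto
  hence "j0 < n" "A i j0 \<noteq> -\<infinity>" using fin by (auto simp: Jset_def)
  hence n0: "0<n" by auto
  have f1: "mp_F n A x i \<noteq> -\<infinity>" using F_notminf[of j0 n A i x, OF \<open>j0<n\<close> \<open>A i j0 \<noteq> -\<infinity>\<close>] .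
  have f2: "mp_F n A x i \<noteq> \<infinity>" using F_notinf[of n A i x, OF n0 ninf] .
  obtain r where r: "mp_F n A x i = ereal r" using f1 f2 by (cases "mp_F n A x i") auto
  have le: "real_of_ereal (A i j) + x j \<le> r" if "j \<in> ?J" for j
  proof -
    have "j<n" using that by (auto simp: Jset_def)
    have "A i j + ereal (x j) \<le> ereal r" using F_ge[OF \<open>j<n\<close>, of A i x] r by simp
    thus ?thesis using fin ninf that \<open>j<n\<close> by (cases "A i j") auto
  qed
  have Kpos: "(\<Sum>j\<in>?J. k j) > 0"
    by (rule sum_pos2[OF finJ j0]) (use j0 in \<open>auto simp: Jset_def\<close>)
  have "(\<Sum>j\<in>?J. k j * (real_of_ereal (A i j) + x j)) \<le> (\<Sum>j\<in>?J. k j * r)"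
    by (rule sum_mono) (use le in \<open>auto simp: Jset_def intro!: mult_left_mono\<close>)
  also have "\<dots> = (\<Sum>j\<in>?J. k j) * r" by (simp add: sum_distrib_right)
  finally have "(\<Sum>j\<in>?J. k j * real_of_ereal (A i j)) + (\<Sum>j\<in>?J. k j * x j) \<le> (\<Sum>j\<in>?J. k j) * r"
    by (simp add: distrib_left sum.distrib)
  moreover have "(\<Sum>j\<in>?J. k j * x j) = c" using fe sum_J[OF k0] by (simp add: feasible_def)
  ultimately have "((\<Sum>j\<in>?J. k j * real_of_ereal (A i j)) + c) / (\<Sum>j\<in>?J. k j) \<le> r"
    using Kpos by (simp add: divide_le_eq mult.commute)
  thus ?thesis using r by simp
qed

lemma achieve:
  assumes k0: "\<forall>j<n. k j \<ge> 0" and Jne: "Jset n k \<noteq> {}"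
    and fin: "\<forall>j\<in>Jset n k. A i j \<noteq> -\<infinity>" and ninf: "\<forall>j<n. A i j \<noteq> \<infinity>" and n0: "0<n"
  shows "\<exists>x. feasible n k c x \<and> mp_F n A x i \<le> ereal (((\<Sum>j\<in>Jset n k. k j * real_of_ereal (A i j)) + c) / (\<Sum>j\<in>Jset n k. k j))"
proof -
  let ?J = "Jset n k"
  define bb where "bb = ((\<Sum>j\<in>?J. k j * real_of_ereal (A i j)) + c) / (\<Sum>j\<in>?J. k j)"
  define x where "x j = (if A i j = -\<infinity> then 0 else bb - real_of_ereal (A i j))" for j
  have finJ: "finite ?J" by (simp add: Jset_def)
  obtain j0 where j0: "j0 \<in> ?J" using Jne by auto
  have Kpos: "(\<Sum>j\<in>?J. k j) > 0"
    by (rule sum_pos2[OF finJ j0]) (use j0 in \<open>auto simp: Jset_def\<close>)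
  have "(\<Sum>j<n. k j * x j) = (\<Sum>j\<in>?J. k j * (bb - real_of_ereal (A i j)))"
    unfolding sum_J[OF k0] by (rule sum.cong) (use fin in \<open>auto simp: x_def\<close>)
  also have "\<dots> = (\<Sum>j\<in>?J. k j) * bb - (\<Sum>j\<in>?J. k j * real_of_ereal (A i j))"
    by (simp add: right_diff_distrib sum_subtractf sum_distrib_left mult.commute)
  also have "\<dots> = c" using Kpos by (simp add: bb_def)
  finally have fe: "feasible n k c x" by (simp add: feasible_def)
  have "mp_F n A x i \<le> ereal bb"
    unfolding F_le_iff[OF n0]
  proof (intro allI impI)
    fix j assume "j<n"
    show "A i j + ereal (x j) \<le> ereal bb"
      using ninf \<open>j<n\<close> by (cases "A i j") (auto simp: x_def)
  qed
  thus ?thesis using fe bb_def by blast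
qed

lemma unbounded:
  assumes "j0 < n" "k j0 > 0" "A i j0 = -\<infinity>" "0 < n" "\<forall>j<n. A i j \<noteq> \<infinity>"
  shows "\<exists>x. feasible n k c x \<and> mp_F n A x i \<le> ereal M"
proof -
  define g where "g j = (if A i j = -\<infinity> then 0 else M - real_of_ereal (A i j))" for j
  define y where "y = (c - (\<Sum>j\<in>{..<n}-{j0}. k j * g j)) / k j0"
  define x where "x j = (if j = j0 then y else g j)" for j
  have "(\<Sum>j<n. k j * x j) = k j0 * x j0 + (\<Sum>j\<in>{..<n}-{j0}. k j * x j)"
    using assms(1) by (subst sum.remove[of _ j0]) auto
  also have "(\<Sum>j\<in>{..<n}-{j0}. k j * x j) = (\<Sum>j\<in>{..<n}-{j0}. k j * g j)"
    by (rule sum.cong) (auto simp: x_def)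
  finally have fe: "feasible n k c x" using assms(2) by (simp add: feasible_def x_def y_def)
  have "mp_F n A x i \<le> ereal M"
    unfolding F_le_iff[OF assms(4)]
  proof (intro allI impI)
    fix j assume "j<n"
    show "A i j + ereal (x j) \<le> ereal M"
      using assms \<open>j<n\<close> by (cases "A i j") (auto simp: x_def g_def)
  qed
  thus ?thesis using fe by blast
qed

theorem theorem4:
  fixes m n :: nat and A :: "nat \<Rightarrow> nat \<Rightarrow> ereal" and k :: "nat \<Rightarrow> real" and c :: real
  assumes "0 < m" and "0 < n"
    and "\<forall>i<m. \<forall>j<n. A i j \<noteq> \<infinity>"
    and "\<forall>j<n. k j \<ge> 0" and "\<exists>j<n. k j \<noteq> 0"
    and "\<forall>i<m. \<exists>j<n. A i j \<noteq> -\<infinity>"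
    and "\<forall>j<n. (\<forall>i<m. A i j = -\<infinity>) \<longrightarrow> k j > 0"
    and "solvable m n A k c"
  shows "{xt. glob_opt m n A k c xt} =
         {xt. (\<forall>j<n. k j = 0 \<longrightarrow> ereal (xt j) \<le> xstar m A (bvec n A k c) j) \<and>
              (\<forall>j<n. k j > 0 \<longrightarrow> ereal (xt j) = xstar m A (bvec n A k c) j)}"
proof -
  note m0 = assms(1) and n0 = assms(2) and ninf = assms(3) and k0 = assms(4)
  let ?J = "Jset n k"
  let ?B = "bvec n A k c"
  obtain x0 where opt: "glob_opt m n A k c x0" using assms(8) by (auto simp: solvable_def)
  have Jne: "?J \<noteq> {}" using assms(5) k0 by (force simp: Jset_def)
  have finJ: "finite ?J" by (simp add: Jset_def)
  have fin: "A i j \<noteq> -\<infinity>" if "i<m" "j \<in> ?J" for i j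
  proof
    assume a: "A i j = -\<infinity>"
    have jn: "j<n" "k j > 0" using that by (auto simp: Jset_def)
    obtain j1 where j1: "j1<n" "A i j1 \<noteq> -\<infinity>" using assms(6) \<open>i<m\<close> by auto
    have "mp_F n A x0 i \<noteq> -\<infinity>" using F_notminf[of j1 n A i x0, OF j1] .
    moreover have "mp_F n A x0 i \<noteq> \<infinity>" using F_notinf[of n A i x0] n0 ninf \<open>i<m\<close> by auto
    ultimately obtain r where r: "mp_F n A x0 i = ereal r" by (cases "mp_F n A x0 i") auto
    obtain x where x: "feasible n k c x" "mp_F n A x i \<le> ereal (r - 1)"
      using unbounded[of j n k A i c "r - 1"] jn a n0 ninf \<open>i<m\<close> by auto
    have "mp_F n A x0 i \<le> mp_F n A x i" using opt x(1) \<open>i<m\<close> by (auto simp: glob_opt_def)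
    hence "ereal r \<le> ereal (r - 1)" using x(2) r by (metis order_trans)
    thus False by simp
  qed
  define bb where "bb i = ((\<Sum>j\<in>?J. k j * real_of_ereal (A i j)) + c) / (\<Sum>j\<in>?J. k j)" for i
  have Bi: "?B i = ereal (bb i)" if "i<m" for i
    using fin[OF that] by (auto simp: bvec_def bb_def)
  have char1: "glob_opt m n A k c x \<longleftrightarrow> (\<forall>i<m. mp_F n A x i \<le> ereal (bb i))"
    if fe: "feasible n k c x" for x
  proof
    assume g: "glob_opt m n A k c x"
    show "\<forall>i<m. mp_F n A x i \<le> ereal (bb i)"
    proof (intro allI impI)
      fix i assume "i<m"
      obtain x' where x': "feasible n k c x'" "mp_F n A x' i \<le> ereal (bb i)"
        using achieve[OF k0 Jne, of A i c] fin[OF \<open>i<m\<close>] ninf \<open>i<m\<close> n0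
        unfolding bb_def by auto
      have "mp_F n A x i \<le> mp_F n A x' i" using g x'(1) \<open>i<m\<close> by (auto simp: glob_opt_def)
      with x'(2) show "mp_F n A x i \<le> ereal (bb i)" by simp
    qed
  next
    assume h: "\<forall>i<m. mp_F n A x i \<le> ereal (bb i)"
    show "glob_opt m n A k c x" unfolding glob_opt_def
    proof (intro conjI allI impI)
      show "feasible n k c x" by fact
      fix x' i assume "feasible n k c x'" "i<m"
      have "ereal (bb i) \<le> mp_F n A x' i"
        using lower[OF k0 Jne, of A i c x'] fin[OF \<open>i<m\<close>] ninf \<open>i<m\<close> \<open>feasible n k c x'\<close>
        unfolding bb_def by auto
      with h \<open>i<m\<close> show "mp_F n A x i \<le> mp_F n A x' i" by (meson order_trans)
    qed
  qed
  have char2: "(\<forall>i<m. mp_F n A x i \<le> ereal (bb i)) \<longleftrightarrow> (\<forall>j<n. ereal (x j) \<le> xstar m A ?B j)" for x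
  proof -
    have "(\<forall>i<m. mp_F n A x i \<le> ereal (bb i)) \<longleftrightarrow> (\<forall>i<m. \<forall>j<n. A i j + ereal (x j) \<le> ereal (bb i))"
      using F_le_iff[OF n0] by simp
    also have "\<dots> \<longleftrightarrow> (\<forall>j<n. \<forall>i<m. ereal (x j) \<le> mp_sub (?B i) (A i j))"
    proof -
      have "A i j + ereal (x j) \<le> ereal (bb i) \<longleftrightarrow> ereal (x j) \<le> mp_sub (?B i) (A i j)"
        if "i<m" "j<n" for i j using sub_iff[of "A i j" "x j" "bb i"] ninf Bi[OF that(1)] that by simp
      thus ?thesis by blast
    qed
    also have "\<dots> \<longleftrightarrow> (\<forall>j<n. ereal (x j) \<le> xstar m A ?B j)"
      using xstar_iff[OF m0] by simp
    finally show ?thesis .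
  qed
  define xs where "xs j = real_of_ereal (xstar m A ?B j)" for j
  have xsJ: "xstar m A ?B j = ereal (xs j)" "xs j \<le> bb 0 - real_of_ereal (A 0 j)" if "j \<in> ?J" for j
  proof -
    have "xstar m A ?B j \<in> (\<lambda>i. mp_sub (?B i) (A i j)) ` {..<m}"
      unfolding xstar_def by (rule Min_in) (use m0 in auto)
    then obtain i where i: "i<m" "xstar m A ?B j = mp_sub (?B i) (A i j)" by auto
    have jn: "j<n" using that by (auto simp: Jset_def)
    show "xstar m A ?B j = ereal (xs j)"
      using i Bi[OF i(1)] fin[OF i(1) that] ninf jn by (cases "A i j") (auto simp: xs_def mp_sub_def)
    have "xstar m A ?B j \<le> mp_sub (?B 0) (A 0 j)"
      unfolding xstar_def by (rule Min_le) (use m0 in auto)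
    then show "xs j \<le> bb 0 - real_of_ereal (A 0 j)"
      using \<open>xstar m A ?B j = ereal (xs j)\<close> Bi[OF m0] fin[OF m0 that] ninf jn m0
      by (cases "A 0 j") (auto simp: mp_sub_def)
  qed
  obtain j0 where j0: "j0 \<in> ?J" using Jne by auto
  have Kpos: "(\<Sum>j\<in>?J. k j) > 0"
    by (rule sum_pos2[OF finJ j0]) (use j0 in \<open>auto simp: Jset_def\<close>)
  have sumxs: "(\<Sum>j\<in>?J. k j * xs j) \<le> c"
  proof -
    have "(\<Sum>j\<in>?J. k j * xs j) \<le> (\<Sum>j\<in>?J. k j * (bb 0 - real_of_ereal (A 0 j)))"
      by (rule sum_mono) (use xsJ(2) in \<open>auto simp: Jset_def intro!: mult_left_mono\<close>)
    also have "\<dots> = (\<Sum>j\<in>?J. k j) * bb 0 - (\<Sum>j\<in>?J. k j * real_of_ereal (A 0 j))"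
      by (simp add: right_diff_distrib sum_subtractf sum_distrib_left mult.commute)
    also have "\<dots> = c" using Kpos by (simp add: bb_def)
    finally show ?thesis .
  qed
  have key: "\<forall>j\<in>?J. x j = xs j"
    if fe: "feasible n k c x" and le: "\<forall>j<n. ereal (x j) \<le> xstar m A ?B j" for x
  proof -
    have lej: "x j \<le> xs j" if "j \<in> ?J" for j
    proof -
      have "j<n" using that by (simp add: Jset_def)
      thus ?thesis using le xsJ(1)[OF that] by auto
    qed
    have sx: "(\<Sum>j\<in>?J. k j * x j) = c" using fe sum_J[OF k0] by (simp add: feasible_def)
    have "(\<Sum>j\<in>?J. k j * (xs j - x j)) = (\<Sum>j\<in>?J. k j * xs j) - c"
      using sx by (simp add: right_diff_distrib sum_subtractf)
    also have "\<dots> \<le> 0" using sumxs by simp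
    finally have s0: "(\<Sum>j\<in>?J. k j * (xs j - x j)) \<le> 0" .
    have nn: "\<forall>j\<in>?J. 0 \<le> k j * (xs j - x j)" using lej by (auto simp: Jset_def)
    have "0 \<le> (\<Sum>j\<in>?J. k j * (xs j - x j))" by (rule sum_nonneg) (use nn in auto)
    hence "(\<Sum>j\<in>?J. k j * (xs j - x j)) = 0" using s0 by linarith
    hence "\<forall>j\<in>?J. k j * (xs j - x j) = 0" using sum_nonneg_eq_0_iff[OF finJ, of "\<lambda>j. k j * (xs j - x j)"] nn by simp
    thus ?thesis by (auto simp: Jset_def)
  qed
  have fe0: "feasible n k c x0" using opt by (simp add: glob_opt_def)
  have le0: "\<forall>j<n. ereal (x0 j) \<le> xstar m A ?B j" using opt char1[OF fe0] char2[of x0] by simp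
  have sumeq: "(\<Sum>j\<in>?J. k j * xs j) = c"
  proof -
    have "(\<Sum>j\<in>?J. k j * xs j) = (\<Sum>j\<in>?J. k j * x0 j)"
      using key[OF fe0 le0] by simp
    also have "\<dots> = c" using fe0 sum_J[OF k0] by (simp add: feasible_def)
    finally show ?thesis .
  qed
  show ?thesis
  proof (intro set_eqI iffI; simp only: mem_Collect_eq)
    fix xt assume g: "glob_opt m n A k c xt"
    have fe: "feasible n k c xt" using g by (simp add: glob_opt_def)
    have le: "\<forall>j<n. ereal (xt j) \<le> xstar m A ?B j" using g char1[OF fe] char2[of xt] by simp
    have eq: "\<forall>j\<in>?J. xt j = xs j" using key[OF fe le] .
    show "(\<forall>j<n. k j = 0 \<longrightarrow> ereal (xt j) \<le> xstar m A ?B j) \<and>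
          (\<forall>j<n. 0 < k j \<longrightarrow> ereal (xt j) = xstar m A ?B j)"
    proof (intro conjI allI impI)
      fix j assume "j<n" "0 < k j"
      hence "j \<in> ?J" by (simp add: Jset_def)
      thus "ereal (xt j) = xstar m A ?B j" using eq xsJ(1) by simp
    qed (use le in auto)
  next
    fix xt assume h: "(\<forall>j<n. k j = 0 \<longrightarrow> ereal (xt j) \<le> xstar m A ?B j) \<and>
          (\<forall>j<n. 0 < k j \<longrightarrow> ereal (xt j) = xstar m A ?B j)"
    have le: "\<forall>j<n. ereal (xt j) \<le> xstar m A ?B j"
    proof (intro allI impI)
      fix j assume "j<n"
      then consider "k j = 0" | "k j > 0" using k0 by force
      thus "ereal (xt j) \<le> xstar m A ?B j" using h \<open>j<n\<close> by cases auto
    qed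
    have eq: "xt j = xs j" if "j \<in> ?J" for j
      using h that xsJ(1)[OF that] by (auto simp: Jset_def)
    have fe: "feasible n k c xt"
      using sum_J[OF k0, of xt] sumeq eq by (simp add: feasible_def)
    show "glob_opt m n A k c xt" using char1[OF fe] char2[of xt] le by simp
  qed
qed

end
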